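(* Let $I\subseteq I_0=\{1,\dots,d\}$ and assume that $V^{jk}_{cc}$ is strictly increasing for every transition $j\to k$ of the model and every $c$ for which it is defined. Then for all $0\le t_1<t_2$ the increment $\mathbf V_I(t_2)-\mathbf V_I(t_1)$ is invertible if at least one of the following holds: (I1) for each $c\in I$, $E_c$ has an exclusive transition with respect to $I$; (I2) $I$ can be written as a disjoint union $I=I_1\cup I_2$ such that for each $c\in I_1$, $E_c$ has an exclusive transition with respect to $I$, and the increments of $\mathbf V_{I_2}$ are invertible.
   Context: Markov multi-state model on $\{0,\dots,l\}$ with transition intensities $\lambda^{jk}$; a transition of the model is $(j,k)$, $j\ne k$, with $\lambda^{jk}\not\equiv0$. Data: $X$ the Markov process with $X(0)=0$, $Z\in\{0,1\}$ treatment indicator, $C(t)=\tilde C\wedge(t-R)_+$ censoring at calendar time $t$ ($R$ entry time, $\tilde C$ dropout), $X$ independent of $(R,Z,\tilde C)$; for $E\subset\{1,\dots,l\}$, $T^E=\inf\{s:X(s)\in E\}$ and $\mu^{j\to E}(s)=\mathbb E[Z\mathbb 1\{X(s-)=j\}\mathbb 1\{s\le T^E\wedge C(t)\}]/\mathbb E[\mathbb 1\{X(s-)=j\}\mathbb 1\{s\le T^E\wedge C(t)\}]$, assumed independent of $t$; $q^{jk}(s)$ deterministic weights. Fix $E_1,\dots,E_d\subset\{1,\dots,l\}$. For $k\in E_{c_1}\cap E_{c_2}$, $j\notin E_{c_1}\cup E_{c_2}$: $V^{jk}_{c_1c_2}(t)=\int_{[0,t]}q^{jk}(s)^2\lambda^{jk}(s)\mathbb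 E[\mathbb 1\{X(s)=j\}\mathbb 1\{s\le C(t)\wedge T^{E_{c_1}\cup E_{c_2}}\}(Z-\mu^{j\to E_{c_1}}(s))(Z-\mu^{j\to E_{c_2}}(s))]ds$, and $\mathbf V(t)$ is the $d\times d$ matrix with entries $V_{c_1c_2}(t)=\sum_{k\in E_{c_1}\cap E_{c_2}}\sum_{j\notin E_{c_1}\cup E_{c_2}}V^{jk}_{c_1c_2}(t)$ (sums over transitions of the model). For $I\subseteq I_0$, $\mathbf V_I$ is the $|I|\times|I|$ submatrix with rows and columns indexed by $I$. A transition $j\to k$ of the model is exclusive for $E_c$ ($c\in I$) with respect to $I$ if $j\notin E_c$, $k\in E_c$, and for every $\tilde c\in I\setminus\{c\}$ either $j\in E_{\tilde c}$ or $k\notin E_{\tilde c}$. *)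

theory Defs
  imports "HOL-Probability.Probability" "Jordan_Normal_Form.Matrix"
begin

text \<open>Left limit X(s-) of a piecewise constant path (for s <= 0 we use X(0)).\<close>
definition left_val :: "(real \<Rightarrow> nat) \<Rightarrow> real \<Rightarrow> nat" where
  "left_val x s = (if s \<le> 0 then x 0 else (THE k. eventually (\<lambda>u. x u = k) (at_left s)))"

text \<open>Cadlag path with finitely many jumps on bounded time intervals (regular jump path on [0,oo)).\<close>
definition jump_path :: "(real \<Rightarrow> nat) \<Rightarrow> bool" where
  "jump_path x \<longleftrightarrow>
     (\<forall>s\<ge>0. eventually (\<lambda>u. x u = x s) (at_right s)) \<and>
     (\<forall>s>0. \<exists>k. eventually (\<lambda>u. x u = k) (at_left s)) \<and>
     (\<forall>T. finite {u \<in> {0..T}. left_val x u \<noteq> x u})"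

definition njumps :: "(real \<Rightarrow> nat) \<Rightarrow> nat \<Rightarrow> nat \<Rightarrow> real \<Rightarrow> nat" where
  "njumps x j k t = card {u \<in> {0<..t}. left_val x u = j \<and> x u = k}"

text \<open>Hitting time T^E = inf {s >= 0. X(s) in E} (infinity if never hit).\<close>
definition hit :: "(real \<Rightarrow> nat) \<Rightarrow> nat set \<Rightarrow> ereal" where
  "hit x E = Inf {ereal s | s. 0 \<le> s \<and> x s \<in> E}"

definition cens :: "ereal \<Rightarrow> real \<Rightarrow> real \<Rightarrow> ereal" where
  "cens Ct R t = min Ct (ereal (max (t - R) 0))"

text \<open>X is a Markov multi-state process on {0..l} with transition intensities lam,
  characterised through its jump counting processes: for every pair j ~= k the process
  N^{jk}(t) - int_0^t 1{X(u-)=j} lam^{jk}(u) du is a martingale w.r.t. the natural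
  filtration (tested against the generating cylinder events of the past).\<close>
definition markov_intensities ::
  "'a measure \<Rightarrow> ('a \<Rightarrow> real \<Rightarrow> nat) \<Rightarrow> nat \<Rightarrow> (nat \<Rightarrow> nat \<Rightarrow> real \<Rightarrow> real) \<Rightarrow> bool" where
  "markov_intensities M X l lam \<longleftrightarrow>
     (\<forall>j k. j \<le> l \<and> k \<le> l \<and> j \<noteq> k \<longrightarrow> lam j k \<in> borel_measurable borel \<and> (\<forall>s\<ge>0. 0 \<le> lam j k s) \<and>
            (\<forall>t. set_integrable lborel {0..t} (lam j k))) \<and>
     (\<forall>\<omega>\<in>space M. X \<omega> 0 = 0 \<and> (\<forall>s\<ge>0. X \<omega> s \<le> l) \<and> jump_path (X \<omega>)) \<and>
     (\<forall>s t n us xs j k. 0 \<le> s \<and> s \<le> t \<and> (\<forall>i<n. 0 \<le> us i \<and> us i \<le> s) \<and>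
        j \<le> l \<and> k \<le> l \<and> j \<noteq> k \<longrightarrow>
        integral\<^sup>L M (\<lambda>\<omega>. indicator {\<omega>'. \<forall>i<(n::nat). X \<omega>' (us i) = xs i} \<omega> *
              (real (njumps (X \<omega>) j k t) - real (njumps (X \<omega>) j k s)))
        = integral\<^sup>L M (\<lambda>\<omega>. indicator {\<omega>'. \<forall>i<n. X \<omega>' (us i) = xs i} \<omega> *
              (LINT u:{s<..t}|lborel. (if left_val (X \<omega>) u = j then lam j k u else 0))))"

definition is_transition :: "nat \<Rightarrow> (nat \<Rightarrow> nat \<Rightarrow> real \<Rightarrow> real) \<Rightarrow> nat \<Rightarrow> nat \<Rightarrow> bool" where
  "is_transition l lam j k \<longleftrightarrow> j \<le> l \<and> k \<le> l \<and> j \<noteq> k \<and> (\<exists>s\<ge>0. lam j k s \<noteq> 0)"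

definition mu_num :: "'a measure \<Rightarrow> ('a \<Rightarrow> real \<Rightarrow> nat) \<Rightarrow> ('a \<Rightarrow> real) \<Rightarrow> ('a \<Rightarrow> real)
    \<Rightarrow> ('a \<Rightarrow> ereal) \<Rightarrow> real \<Rightarrow> nat \<Rightarrow> nat set \<Rightarrow> real \<Rightarrow> real" where
  "mu_num M X Z R Ct t j E s = integral\<^sup>L M (\<lambda>\<omega>. Z \<omega> *
      indicator {\<omega>'. left_val (X \<omega>') s = j} \<omega> *
      indicator {\<omega>'. ereal s \<le> min (hit (X \<omega>') E) (cens (Ct \<omega>') (R \<omega>') t)} \<omega>)"

definition mu_den :: "'a measure \<Rightarrow> ('a \<Rightarrow> real \<Rightarrow> nat) \<Rightarrow> ('a \<Rightarrow> real)
    \<Rightarrow> ('a \<Rightarrow> ereal) \<Rightarrow> real \<Rightarrow> nat \<Rightarrow> nat set \<Rightarrow> real \<Rightarrow> real" where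
  "mu_den M X R Ct t j E s = integral\<^sup>L M (\<lambda>\<omega>.
      indicator {\<omega>'. left_val (X \<omega>') s = j} \<omega> *
      indicator {\<omega>'. ereal s \<le> min (hit (X \<omega>') E) (cens (Ct \<omega>') (R \<omega>') t)} \<omega>)"

definition Vjk :: "'a measure \<Rightarrow> ('a \<Rightarrow> real \<Rightarrow> nat) \<Rightarrow> ('a \<Rightarrow> real) \<Rightarrow> ('a \<Rightarrow> real)
    \<Rightarrow> ('a \<Rightarrow> ereal) \<Rightarrow> (nat \<Rightarrow> nat \<Rightarrow> real \<Rightarrow> real) \<Rightarrow> (nat \<Rightarrow> nat \<Rightarrow> real \<Rightarrow> real)
    \<Rightarrow> (nat \<Rightarrow> nat set \<Rightarrow> real \<Rightarrow> real) \<Rightarrow> (nat \<Rightarrow> nat set)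
    \<Rightarrow> nat \<Rightarrow> nat \<Rightarrow> nat \<Rightarrow> nat \<Rightarrow> real \<Rightarrow> real" where
  "Vjk M X Z R Ct lam q mu E j k c1 c2 t =
     (LINT s:{0..t}|lborel. (q j k s)\<^sup>2 * lam j k s *
        integral\<^sup>L M (\<lambda>\<omega>. indicator {\<omega>'. X \<omega>' s = j} \<omega> *
          indicator {\<omega>'. ereal s \<le> min (cens (Ct \<omega>') (R \<omega>') t) (hit (X \<omega>') (E c1 \<union> E c2))} \<omega> *
          (Z \<omega> - mu j (E c1) s) * (Z \<omega> - mu j (E c2) s)))"

definition Vent :: "'a measure \<Rightarrow> ('a \<Rightarrow> real \<Rightarrow> nat) \<Rightarrow> ('a \<Rightarrow> real) \<Rightarrow> ('a \<Rightarrow> real)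
    \<Rightarrow> ('a \<Rightarrow> ereal) \<Rightarrow> nat \<Rightarrow> (nat \<Rightarrow> nat \<Rightarrow> real \<Rightarrow> real) \<Rightarrow> (nat \<Rightarrow> nat \<Rightarrow> real \<Rightarrow> real)
    \<Rightarrow> (nat \<Rightarrow> nat set \<Rightarrow> real \<Rightarrow> real) \<Rightarrow> (nat \<Rightarrow> nat set)
    \<Rightarrow> nat \<Rightarrow> nat \<Rightarrow> real \<Rightarrow> real" where
  "Vent M X Z R Ct l lam q mu E c1 c2 t =
     (\<Sum>k\<in>{k. k \<le> l \<and> k \<in> E c1 \<inter> E c2}.
        \<Sum>j\<in>{j. j \<le> l \<and> j \<notin> E c1 \<union> E c2 \<and> is_transition l lam j k}.
           Vjk M X Z R Ct lam q mu E j k c1 c2 t)"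

definition submat_idx :: "nat set \<Rightarrow> (nat \<Rightarrow> nat \<Rightarrow> real) \<Rightarrow> real mat" where
  "submat_idx I A = mat (card I) (card I)
     (\<lambda>(a, b). A (sorted_list_of_set I ! a) (sorted_list_of_set I ! b))"

definition exclusive :: "nat \<Rightarrow> (nat \<Rightarrow> nat \<Rightarrow> real \<Rightarrow> real) \<Rightarrow> (nat \<Rightarrow> nat set)
    \<Rightarrow> nat set \<Rightarrow> nat \<Rightarrow> nat \<Rightarrow> nat \<Rightarrow> bool" where
  "exclusive l lam E I c j k \<longleftrightarrow> is_transition l lam j k \<and> j \<notin> E c \<and> k \<in> E c \<and>
     (\<forall>c'\<in>I - {c}. j \<in> E c' \<or> k \<notin> E c')"

end

theory Submission
  imports Defs "Jordan_Normal_Form.Determinant"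
begin

definition idx :: "nat list \<Rightarrow> nat \<Rightarrow> nat" where
  "idx L c = (THE b. b < length L \<and> L ! b = c)"

lemma idx_props:
  assumes "distinct L" "c \<in> set L"
  shows "idx L c < length L" "L ! idx L c = c"
proof -
  obtain b where b: "b < length L" "L ! b = c" using assms(2) by (auto simp: in_set_conv_nth)
  have "idx L c = b" unfolding idx_def
    by (rule the_equality) (use b assms(1) nth_eq_iff_index_eq in auto)
  thus "idx L c < length L" "L ! idx L c = c" using b by auto
qed

lemma idx_nth:
  assumes "distinct L" "b < length L"
  shows "idx L (L ! b) = b"
  unfolding idx_def
  by (rule the_equality) (use assms nth_eq_iff_index_eq in auto)


lemma sum_sorted_list:
  assumes "finite I"
  shows "(\<Sum>b<card I. f (sorted_list_of_set I ! b)) = (\<Sum>c\<in>I. f c)"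
proof -
  let ?L = "sorted_list_of_set I"
  have "(\<Sum>c\<in>I. f c) = (\<Sum>c\<in>set ?L. f c)" using assms by simp
  also have "\<dots> = sum_list (map f ?L)" by (rule sum.distinct_set_conv_list) simp
  also have "\<dots> = (\<Sum>b<length ?L. f (?L ! b))"
    by (simp add: sum_list_sum_nth atLeast0LessThan)
  finally show ?thesis using assms by simp
qed

lemma submat_mult:
  assumes "finite I" "v \<in> carrier_vec (card I)" "a < card I"
  shows "((submat_idx I A2 - submat_idx I A1) *\<^sub>v v) $ a =
     (\<Sum>c\<in>I. (A2 (sorted_list_of_set I ! a) c - A1 (sorted_list_of_set I ! a) c) *
        v $ (idx (sorted_list_of_set I) c))"
proof -
  let ?L = "sorted_list_of_set I"
  have "((submat_idx I A2 - submat_idx I A1) *\<^sub>v v) $ a =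
     (\<Sum>b<card I. (A2 (?L ! a) (?L ! b) - A1 (?L ! a) (?L ! b)) * v $ b)"
    using assms by (simp add: submat_idx_def scalar_prod_def atLeast0LessThan)
  also have "\<dots> = (\<Sum>b<card I. (\<lambda>c. (A2 (?L ! a) c - A1 (?L ! a) c) * v $ (idx ?L c)) (?L ! b))"
    using assms by (intro sum.cong refl) (simp add: idx_nth)
  also have "\<dots> = (\<Sum>c\<in>I. (A2 (sorted_list_of_set I ! a) c - A1 (sorted_list_of_set I ! a) c) *
        v $ (idx (sorted_list_of_set I) c))" by (rule sum_sorted_list[OF assms(1)])
  finally show ?thesis .
qed

lemma inj_invertible:
  fixes A :: "real mat"
  assumes A: "A \<in> carrier_mat n n"
    and inj: "\<And>v. v \<in> carrier_vec n \<Longrightarrow> A *\<^sub>v v = 0\<^sub>v n \<Longrightarrow> v = 0\<^sub>v n"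
  shows "invertible_mat A"
proof -
  have "Determinant.det A \<noteq> 0" using det_0_iff_vec_prod_zero_field[OF A] inj by blast
  from det_non_zero_imp_unit[OF A this, of "()"]
  obtain B where B: "B \<in> carrier_mat n n" "B * A = 1\<^sub>m n" "A * B = 1\<^sub>m n"
    unfolding Units_def ring_mat_def by auto
  show ?thesis unfolding invertible_mat_def inverts_mat_def using A B by auto
qed

lemma invertible_inj:
  fixes A :: "real mat"
  assumes A: "A \<in> carrier_mat n n" and inv: "invertible_mat A"
    and v: "v \<in> carrier_vec n" and Av: "A *\<^sub>v v = 0\<^sub>v n"
  shows "v = 0\<^sub>v n"
proof -
  obtain B where B1: "A * B = 1\<^sub>m (dim_row A)" and B2: "B * A = 1\<^sub>m (dim_row B)"
    using inv unfolding invertible_mat_def inverts_mat_def by auto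
  have "dim_col B = n" using B1 A by (metis carrier_matD(1) index_mult_mat(3) index_one_mat(3))
  have rB: "dim_row B = n" using B2 A by (metis carrier_matD(2) index_mult_mat(3) index_one_mat(3))
  have Bc: "B \<in> carrier_mat n n" using rB \<open>dim_col B = n\<close> by auto
  have "v = (B * A) *\<^sub>v v" using B2 rB v by simp
  also have "\<dots> = B *\<^sub>v (A *\<^sub>v v)" using A Bc v by (simp add: assoc_mult_mat_vec)
  also have "\<dots> = 0\<^sub>v n" using Av Bc by (intro eq_vecI) (auto simp: scalar_prod_def)
  finally show ?thesis .
qed

lemma key_matrix:
  fixes A1 A2 :: "nat \<Rightarrow> nat \<Rightarrow> real"
  assumes fin: "finite I"
    and H: "\<And>x. (\<forall>c1\<in>I. (\<Sum>c2\<in>I. (A2 c1 c2 - A1 c1 c2) * x c2) = 0) \<Longrightarrow> \<forall>c\<in>I. x c = 0"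
  shows "invertible_mat (submat_idx I A2 - submat_idx I A1)"
proof (rule inj_invertible)
  let ?L = "sorted_list_of_set I"
  show "submat_idx I A2 - submat_idx I A1 \<in> carrier_mat (card I) (card I)"
    unfolding submat_idx_def by (rule minus_carrier_mat) auto
  fix v assume v: "v \<in> carrier_vec (card I)"
    and Dv: "(submat_idx I A2 - submat_idx I A1) *\<^sub>v v = 0\<^sub>v (card I)"
  define x where "x c = v $ (idx ?L c)" for c
  have "\<forall>c1\<in>I. (\<Sum>c2\<in>I. (A2 c1 c2 - A1 c1 c2) * x c2) = 0"
  proof
    fix c1 assume c1: "c1 \<in> I"
    define a where "a = idx ?L c1"
    have a: "a < card I" "?L ! a = c1" using c1 fin idx_props[of ?L c1] by (auto simp: a_def)
    have "0 = ((submat_idx I A2 - submat_idx I A1) *\<^sub>v v) $ a" using Dv a by simp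
    also have "\<dots> = (\<Sum>c2\<in>I. (A2 c1 c2 - A1 c1 c2) * x c2)"
      using submat_mult[OF fin v a(1)] a by (simp add: x_def)
    finally show "(\<Sum>c2\<in>I. (A2 c1 c2 - A1 c1 c2) * x c2) = 0" by simp
  qed
  from H[OF this] have x0: "\<forall>c\<in>I. x c = 0" .
  show "v = 0\<^sub>v (card I)"
  proof (rule eq_vecI)
    fix i assume i: "i < dim_vec (0\<^sub>v (card I))"
    hence i': "i < card I" by simp
    have "?L ! i \<in> I" using i' fin by (metis length_sorted_list_of_set nth_mem set_sorted_list_of_set)
    moreover have "idx ?L (?L ! i) = i" using i' fin by (simp add: idx_nth)
    ultimately show "v $ i = 0\<^sub>v (card I) $ i" using x0 i' unfolding x_def by force
  qed (use v in simp)
qed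

lemma key_matrix2:
  fixes A1 A2 :: "nat \<Rightarrow> nat \<Rightarrow> real"
  assumes fin: "finite I"
    and inv: "invertible_mat (submat_idx I A2 - submat_idx I A1)"
    and H: "\<forall>c1\<in>I. (\<Sum>c2\<in>I. (A2 c1 c2 - A1 c1 c2) * x c2) = 0"
  shows "\<forall>c\<in>I. x c = 0"
proof
  let ?L = "sorted_list_of_set I"
  define v where "v = vec (card I) (\<lambda>b. x (?L ! b))"
  have v: "v \<in> carrier_vec (card I)" by (simp add: v_def)
  have Dv: "(submat_idx I A2 - submat_idx I A1) *\<^sub>v v = 0\<^sub>v (card I)"
  proof (rule eq_vecI)
    fix a assume "a < dim_vec (0\<^sub>v (card I))"
    hence a: "a < card I" by simp
    have "?L ! a \<in> I" using a fin by (metis length_sorted_list_of_set nth_mem set_sorted_list_of_set)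
    have "((submat_idx I A2 - submat_idx I A1) *\<^sub>v v) $ a =
      (\<Sum>c\<in>I. (A2 (?L ! a) c - A1 (?L ! a) c) * v $ (idx ?L c))"
      by (rule submat_mult[OF fin v a])
    also have "\<dots> = (\<Sum>c\<in>I. (A2 (?L ! a) c - A1 (?L ! a) c) * x c)"
      using fin by (intro sum.cong refl) (use idx_props[of ?L] in \<open>simp add: v_def\<close>)
    also have "\<dots> = 0" using H \<open>?L ! a \<in> I\<close> by blast
    finally show "((submat_idx I A2 - submat_idx I A1) *\<^sub>v v) $ a = 0\<^sub>v (card I) $ a" using a by simp
  qed (simp add: submat_idx_def)
  have v0: "v = 0\<^sub>v (card I)"
    by (rule invertible_inj[OF _ inv v Dv]) (unfold submat_idx_def, rule minus_carrier_mat, auto)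
  fix c assume c: "c \<in> I"
  define b where "b = idx ?L c"
  have b: "b < card I" "?L ! b = c" using c fin idx_props[of ?L c] by (auto simp: b_def)
  have "v $ b = 0" using v0 b by simp
  thus "x c = 0" using b by (simp add: v_def)
qed

lemma hit_iff:
  assumes jp: "jump_path x"
  shows "ereal s \<le> hit x A \<longleftrightarrow>
    (\<forall>r::rat. 0 \<le> real_of_rat r \<and> real_of_rat r < s \<longrightarrow> x (real_of_rat r) \<notin> A)"
proof
  assume H: "ereal s \<le> hit x A"
  show "\<forall>r::rat. 0 \<le> real_of_rat r \<and> real_of_rat r < s \<longrightarrow> x (real_of_rat r) \<notin> A"
  proof (intro allI impI)
    fix r :: rat assume r: "0 \<le> real_of_rat r \<and> real_of_rat r < s"
    show "x (real_of_rat r) \<notin> A"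
    proof
      assume "x (real_of_rat r) \<in> A"
      hence "hit x A \<le> ereal (real_of_rat r)" unfolding hit_def using r by (auto intro!: Inf_lower)
      hence "ereal s \<le> ereal (real_of_rat r)" using H by (rule order.trans[rotated])
      with r show False by simp
    qed
  qed
next
  assume H: "\<forall>r::rat. 0 \<le> real_of_rat r \<and> real_of_rat r < s \<longrightarrow> x (real_of_rat r) \<notin> A"
  show "ereal s \<le> hit x A" unfolding hit_def
  proof (rule Inf_greatest, clarify)
    fix u assume u: "0 \<le> u" "x u \<in> A"
    show "ereal s \<le> ereal u"
    proof (rule ccontr)
      assume "\<not> ereal s \<le> ereal u"
      hence us: "u < s" by simp
      have "eventually (\<lambda>v. x v = x u) (at_right u)" using jp u unfolding jump_path_def by blast
      then obtain b where b: "b > u" "\<And>y. y > u \<Longrightarrow> y < b \<Longrightarrow> x y = x u"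
        unfolding eventually_at_right_field by blast
      obtain r where r: "r \<in> \<rat>" "u < r" "r < min b s" using Rats_dense_in_real[of u "min b s"] b us by auto
      obtain r' where r': "r = real_of_rat r'" using r(1) by (auto elim: Rats_cases)
      have "x r = x u" using b r by auto
      moreover have "0 \<le> real_of_rat r'" using u r r' by linarith
      ultimately show False using u H r r' by auto
    qed
  qed
qed

lemma left_val_iff:
  assumes jp: "jump_path x" and s: "s > 0"
  shows "left_val x s = v \<longleftrightarrow>
    (\<exists>n::nat. \<forall>r::rat. s - 1 / real (Suc n) < real_of_rat r \<and> real_of_rat r < s \<longrightarrow> x (real_of_rat r) = v)"
proof -
  obtain k where k: "eventually (\<lambda>u. x u = k) (at_left s)" using jp s unfolding jump_path_def by blast
  have lv: "left_val x s = k" unfolding left_val_def using s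
  proof (simp, intro the_equality k)
    fix k' assume "eventually (\<lambda>u. x u = k') (at_left s)"
    with k have "eventually (\<lambda>u. k' = k) (at_left s)" by eventually_elim auto
    thus "k' = k" by (simp add: trivial_limit_at_left_real)
  qed
  obtain b where b: "b < s" "\<And>y. y > b \<Longrightarrow> y < s \<Longrightarrow> x y = k"
    using k unfolding eventually_at_left_field by blast
  show ?thesis
  proof
    assume "left_val x s = v"
    hence kv: "k = v" using lv by simp
    obtain n where n: "inverse (real (Suc n)) < s - b" using b(1) reals_Archimedean[of "s - b"] by auto
    show "\<exists>n::nat. \<forall>r::rat. s - 1 / real (Suc n) < real_of_rat r \<and> real_of_rat r < s \<longrightarrow> x (real_of_rat r) = v"
    proof (intro exI[of _ n] allI impI)
      fix r :: rat assume r: "s - 1 / real (Suc n) < real_of_rat r \<and> real_of_rat r < s"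
      have "1 / real (Suc n) = inverse (real (Suc n))" by (simp add: divide_inverse)
      hence "b < real_of_rat r" using r n by linarith
      thus "x (real_of_rat r) = v" using b r kv by auto
    qed
  next
    assume "\<exists>n::nat. \<forall>r::rat. s - 1 / real (Suc n) < real_of_rat r \<and> real_of_rat r < s \<longrightarrow> x (real_of_rat r) = v"
    then obtain n where n: "\<forall>r::rat. s - 1 / real (Suc n) < real_of_rat r \<and> real_of_rat r < s \<longrightarrow> x (real_of_rat r) = v" by blast
    have "max b (s - 1 / real (Suc n)) < s" using b by auto
    then obtain r where r: "r \<in> \<rat>" "max b (s - 1 / real (Suc n)) < r" "r < s" using Rats_dense_in_real by blast
    obtain r' where r': "r = real_of_rat r'" using r(1) by (auto elim: Rats_cases)
    have "x r = k" using b r by auto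
    moreover have "x r = v" using n r r' by auto
    ultimately show "left_val x s = v" using lv by simp
  qed
qed

lemma hit_Un: "hit x (A \<union> B) = min (hit x A) (hit x B)"
proof -
  have "{ereal s |s. 0 \<le> s \<and> x s \<in> A \<union> B} = {ereal s |s. 0 \<le> s \<and> x s \<in> A} \<union> {ereal s |s. 0 \<le> s \<and> x s \<in> B}"
    by auto
  thus ?thesis unfolding hit_def by (simp add: Inf_union_distrib inf_min)
qed

lemma cens_mono: "t1 \<le> t2 \<Longrightarrow> cens C R t1 \<le> cens C R t2"
  unfolding cens_def by (rule min.mono) (simp_all add: max_def)

locale setting = prob_space M for M :: "'a measure" +
  fixes X :: "'a \<Rightarrow> real \<Rightarrow> nat"
    and Z R :: "'a \<Rightarrow> real" and Ct :: "'a \<Rightarrow> ereal"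
    and l d :: nat and lam q :: "nat \<Rightarrow> nat \<Rightarrow> real \<Rightarrow> real"
    and mu :: "nat \<Rightarrow> nat set \<Rightarrow> real \<Rightarrow> real"
    and E :: "nat \<Rightarrow> nat set"
  assumes markov: "markov_intensities M X l lam"
    and X_meas: "(\<lambda>(\<omega>, s). X \<omega> s) \<in> measurable (M \<Otimes>\<^sub>M lborel) (count_space UNIV)"
    and Z_meas: "Z \<in> borel_measurable M" and Z01: "\<forall>\<omega>\<in>space M. Z \<omega> \<in> {0, 1}"
    and R_meas: "R \<in> borel_measurable M" and Ct_meas: "Ct \<in> borel_measurable M"
begin

lemma jp: "\<omega> \<in> space M \<Longrightarrow> jump_path (X \<omega>)"
  using markov unfolding markov_intensities_def by blast

lemma X_s_meas[measurable]: "(\<lambda>\<omega>. X \<omega> s) \<in> measurable M (count_space UNIV)"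
proof -
  have "(\<lambda>\<omega>. (\<omega>, s)) \<in> measurable M (M \<Otimes>\<^sub>M lborel)" by measurable
  from measurable_comp[OF this X_meas] show ?thesis by (simp add: o_def)
qed

lemma X_joint[measurable]: "(\<lambda>p. X (snd p) (fst p)) \<in> measurable (lborel \<Otimes>\<^sub>M M) (count_space UNIV)"
proof -
  have "(\<lambda>p. (snd p, fst p)) \<in> measurable (lborel \<Otimes>\<^sub>M M) (M \<Otimes>\<^sub>M lborel)" by measurable
  from measurable_comp[OF this X_meas] show ?thesis by (simp add: o_def case_prod_beta)
qed

lemma Z_m[measurable]: "Z \<in> borel_measurable M" by (rule Z_meas)
lemma R_m[measurable]: "R \<in> borel_measurable M" by (rule R_meas)
lemma Ct_m[measurable]: "Ct \<in> borel_measurable M" by (rule Ct_meas)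

lemma cens_meas[measurable]: "(\<lambda>\<omega>. cens (Ct \<omega>) (R \<omega>) t) \<in> borel_measurable M"
  unfolding cens_def by measurable

lemma hit_joint[measurable]: "Measurable.pred (lborel \<Otimes>\<^sub>M M) (\<lambda>p. ereal (fst p) \<le> hit (X (snd p)) A)"
proof -
  have "Measurable.pred (lborel \<Otimes>\<^sub>M M) (\<lambda>p. \<forall>r::rat. 0 \<le> real_of_rat r \<and> real_of_rat r < fst p \<longrightarrow> X (snd p) (real_of_rat r) \<notin> A)"
    by measurable
  moreover have "\<And>p. p \<in> space (lborel \<Otimes>\<^sub>M M) \<Longrightarrow> (ereal (fst p) \<le> hit (X (snd p)) A) =
     (\<forall>r::rat. 0 \<le> real_of_rat r \<and> real_of_rat r < fst p \<longrightarrow> X (snd p) (real_of_rat r) \<notin> A)"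
    using hit_iff jp by (auto simp: space_pair_measure)
  ultimately show ?thesis unfolding pred_def
    by (smt (verit, best) Collect_cong)
qed

lemma hit_meas[measurable]: "Measurable.pred M (\<lambda>\<omega>. ereal s \<le> hit (X \<omega>) A)"
proof -
  have "(\<lambda>\<omega>. (s, \<omega>)) \<in> measurable M (lborel \<Otimes>\<^sub>M M)" by measurable
  from measurable_comp[OF this hit_joint[where A=A]] show ?thesis by (simp add: o_def)
qed

lemma cens_joint[measurable]: "(\<lambda>p. cens (Ct (snd p)) (R (snd p)) t) \<in> borel_measurable (lborel \<Otimes>\<^sub>M M)"
  unfolding cens_def by measurable

lemma left_val_meas[measurable]: "s \<ge> 0 \<Longrightarrow> (\<lambda>\<omega>. left_val (X \<omega>) s) \<in> measurable M (count_space UNIV)"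
proof (cases "s = 0")
  case True
  thus ?thesis by (simp add: left_val_def)
next
  case False
  assume "s \<ge> 0" hence s: "s > 0" using False by simp
  show ?thesis
  proof (rule measurable_count_space_eq_countable[THEN iffD2, OF countableI_type], intro conjI ballI)
    fix v :: nat assume "v \<in> UNIV"
    have "Measurable.pred M (\<lambda>\<omega>. \<exists>n::nat. \<forall>r::rat. s - 1 / real (Suc n) < real_of_rat r \<and> real_of_rat r < s \<longrightarrow> X \<omega> (real_of_rat r) = v)"
      by measurable
    moreover have "\<And>\<omega>. \<omega> \<in> space M \<Longrightarrow> (left_val (X \<omega>) s = v) = 
      (\<exists>n::nat. \<forall>r::rat. s - 1 / real (Suc n) < real_of_rat r \<and> real_of_rat r < s \<longrightarrow> X \<omega> (real_of_rat r) = v)"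
      using left_val_iff[OF jp s] by blast
    ultimately have "{\<omega> \<in> space M. left_val (X \<omega>) s = v} \<in> sets M"
      unfolding pred_def by (smt (verit, best) Collect_cong)
    moreover have "(\<lambda>\<omega>. left_val (X \<omega>) s) -` {v} \<inter> space M = {\<omega> \<in> space M. left_val (X \<omega>) s = v}" by auto
    ultimately show "(\<lambda>\<omega>. left_val (X \<omega>) s) -` {v} \<inter> space M \<in> sets M" by simp
  qed auto
qed

end

context setting begin

definition Bs :: "real \<Rightarrow> 'a set" where
  "Bs s = {\<omega> \<in> space M. left_val (X \<omega>) s \<noteq> X \<omega> s}"

lemma Bs_sets: assumes "s \<ge> 0" shows "Bs s \<in> sets M"
proof -
  have [measurable]: "(\<lambda>\<omega>. left_val (X \<omega>) s) \<in> measurable M (count_space UNIV)"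
    using left_val_meas[OF assms] .
  have "Measurable.pred M (\<lambda>\<omega>. \<exists>v::nat. left_val (X \<omega>) s = v \<and> X \<omega> s \<noteq> v)" by measurable
  moreover have "Bs s = {\<omega> \<in> space M. \<exists>v::nat. left_val (X \<omega>) s = v \<and> X \<omega> s \<noteq> v}"
    unfolding Bs_def by auto
  ultimately show ?thesis unfolding pred_def by simp
qed

definition Dset :: "real set" where
  "Dset = {s. 0 < s \<and> prob (Bs s) \<noteq> 0}"

lemma finite_part:
  assumes eps: "\<epsilon> > 0"
  shows "finite {s. 0 < s \<and> s \<le> T \<and> prob (Bs s) > \<epsilon>}" (is "finite ?S")
proof (rule ccontr)
  assume "infinite ?S"
  then obtain f :: "nat \<Rightarrow> real" where f: "inj f" "range f \<subseteq> ?S"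
    using infinite_countable_subset by blast
  define A where "A i = Bs (f i)" for i
  define C where "C N = (\<Union>i\<in>{N..}. A i)" for N
  have fpos: "0 < f i" "f i \<le> T" "prob (A i) > \<epsilon>" for i using f(2) by (auto simp: A_def)
  have A_ev: "A i \<in> events" for i unfolding A_def using fpos(1)[of i] by (intro Bs_sets) simp
  have C_ev: "C N \<in> events" for N unfolding C_def using A_ev by auto
  have dec: "decseq C" unfolding C_def by (intro decseq_SucI UN_mono) auto
  have lim: "(\<lambda>N. prob (C N)) \<longlonglongrightarrow> prob (\<Inter>N. C N)"
    by (rule finite_Lim_measure_decseq) (use C_ev dec in auto)
  have "\<epsilon> \<le> prob (C N)" for N
  proof -
    have "prob (A N) \<le> prob (C N)" using C_ev A_ev by (intro finite_measure_mono) (auto simp: C_def)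
    thus ?thesis using fpos(3)[of N] by simp
  qed
  hence "\<epsilon> \<le> prob (\<Inter>N. C N)" using lim by (intro LIMSEQ_le_const) auto
  hence "(\<Inter>N. C N) \<noteq> {}" using eps by auto
  then obtain \<omega> where w: "\<And>N. \<omega> \<in> C N" by auto
  have wsp: "\<omega> \<in> space M" using w[of 0] unfolding C_def A_def Bs_def by auto
  have "infinite {i. \<omega> \<in> A i}" unfolding infinite_nat_iff_unbounded_le
    using w unfolding C_def by auto
  hence inf: "infinite (f ` {i. \<omega> \<in> A i})" using f(1) by (metis finite_imageD inj_on_subset subset_UNIV)
  have "f ` {i. \<omega> \<in> A i} \<subseteq> {u \<in> {0..T}. left_val (X \<omega>) u \<noteq> X \<omega> u}"
    using fpos unfolding A_def Bs_def by (auto simp: less_imp_le)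
  moreover have "finite {u \<in> {0..T}. left_val (X \<omega>) u \<noteq> X \<omega> u}"
    using jp[OF wsp] unfolding jump_path_def by blast
  ultimately show False using inf finite_subset by blast
qed

lemma countable_Dset: "countable Dset"
proof -
  have "Dset \<subseteq> (\<Union>n::nat. \<Union>T::nat. {s. 0 < s \<and> s \<le> real T \<and> prob (Bs s) > 1 / real (Suc n)})"
  proof
    fix s assume s: "s \<in> Dset"
    have "prob (Bs s) \<ge> 0" by simp
    moreover from s have "prob (Bs s) \<noteq> 0" "s > 0" by (auto simp: Dset_def)
    ultimately have p: "prob (Bs s) > 0" "s > 0" by linarith+
    obtain n where n: "inverse (real (Suc n)) < prob (Bs s)" using reals_Archimedean[OF p(1)] by auto
    obtain T :: nat where T: "s \<le> real T" using real_arch_simple by blast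
    have "s \<in> {s. 0 < s \<and> s \<le> real T \<and> prob (Bs s) > 1 / real (Suc n)}"
      using n T p by (simp add: divide_inverse)
    thus "s \<in> (\<Union>n::nat. \<Union>T::nat. {s. 0 < s \<and> s \<le> real T \<and> prob (Bs s) > 1 / real (Suc n)})"
      by blast
  qed
  moreover have "countable (\<Union>n::nat. \<Union>T::nat. {s. 0 < s \<and> s \<le> real T \<and> prob (Bs s) > 1 / real (Suc n)})"
  proof -
    have "countable {s. 0 < s \<and> s \<le> real T \<and> prob (Bs s) > 1 / real (Suc n)}" for n T :: nat
      by (rule countable_finite, rule finite_part) simp
    thus ?thesis by (intro countable_UN countableI_type) blast
  qed
  ultimately show ?thesis using countable_subset by blast
qed

lemma AE_left:
  assumes "s \<ge> 0" "s \<notin> Dset"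
  shows "AE \<omega> in M. left_val (X \<omega>) s = X \<omega> s"
proof (cases "s = 0")
  case True thus ?thesis by (simp add: left_val_def)
next
  case False
  hence "prob (Bs s) = 0" using assms unfolding Dset_def by auto
  moreover have "Bs s \<in> events" using assms by (intro Bs_sets)
  ultimately have "Bs s \<in> null_sets M" by (simp add: null_sets_def emeasure_eq_measure)
  thus ?thesis by (rule AE_I') (auto simp: Bs_def)
qed

end

context setting begin

definition Fi :: "nat \<Rightarrow> real \<Rightarrow> nat set \<Rightarrow> real \<Rightarrow> real \<Rightarrow> real \<Rightarrow> 'a \<Rightarrow> real" where
  "Fi j t A a b s \<omega> = indicator {\<omega>'. X \<omega>' s = j} \<omega> *
     indicator {\<omega>'. ereal s \<le> min (cens (Ct \<omega>') (R \<omega>') t) (hit (X \<omega>') A)} \<omega> *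
     (Z \<omega> - a) * (Z \<omega> - b)"

lemma Fi_if: "Fi j t A a b s \<omega> = (if X \<omega> s = j \<and> ereal s \<le> cens (Ct \<omega>) (R \<omega>) t \<and> ereal s \<le> hit (X \<omega>) A
   then (Z \<omega> - a) * (Z \<omega> - b) else 0)"
  by (simp add: Fi_def indicator_def)

lemma Fi_meas[measurable]: "Fi j t A a b s \<in> borel_measurable M"
  unfolding Fi_if[abs_def] by measurable

lemma Fi_joint:
  assumes [measurable]: "\<phi>1 \<in> borel_measurable borel" "\<phi>2 \<in> borel_measurable borel"
  shows "(\<lambda>p. Fi j t A (\<phi>1 (fst p)) (\<phi>2 (fst p)) (fst p) (snd p)) \<in> borel_measurable (lborel \<Otimes>\<^sub>M M)"
proof -
  have [measurable]: "fst \<in> borel_measurable (lborel \<Otimes>\<^sub>M M)"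
    by (metis measurable_fst measurable_lborel1)
  show ?thesis unfolding Fi_if by measurable
qed

lemma inner_meas:
  assumes "\<phi>1 \<in> borel_measurable borel" "\<phi>2 \<in> borel_measurable borel"
  shows "(\<lambda>s. integral\<^sup>L M (Fi j t A (\<phi>1 s) (\<phi>2 s) s)) \<in> borel_measurable lborel"
  using borel_measurable_lebesgue_integral[of "\<lambda>s \<omega>. Fi j t A (\<phi>1 s) (\<phi>2 s) s \<omega>" lborel]
    Fi_joint[OF assms, of j t A] by (simp add: case_prod_beta)

lemma Z_bound: "\<omega> \<in> space M \<Longrightarrow> \<bar>Z \<omega> - a\<bar> \<le> 1 + \<bar>a\<bar>"
  using Z01 by auto

lemma Fi_int: "integrable M (Fi j t A a b s)"
proof (rule integrable_const_bound[where B="(1 + \<bar>a\<bar>) * (1 + \<bar>b\<bar>)"])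
  show "AE \<omega> in M. norm (Fi j t A a b s \<omega>) \<le> (1 + \<bar>a\<bar>) * (1 + \<bar>b\<bar>)"
  proof (rule AE_I2)
    fix \<omega> assume w: "\<omega> \<in> space M"
    have "\<bar>(Z \<omega> - a) * (Z \<omega> - b)\<bar> \<le> (1 + \<bar>a\<bar>) * (1 + \<bar>b\<bar>)"
      unfolding abs_mult by (intro mult_mono Z_bound w) auto
    thus "norm (Fi j t A a b s \<omega>) \<le> (1 + \<bar>a\<bar>) * (1 + \<bar>b\<bar>)"
      by (simp add: Fi_if)
  qed
qed simp

definition Gd :: "nat \<Rightarrow> real \<Rightarrow> nat set \<Rightarrow> real \<Rightarrow> 'a \<Rightarrow> real" where
  "Gd j t A s \<omega> = indicator {\<omega>'. X \<omega>' s = j} \<omega> *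
     indicator {\<omega>'. ereal s \<le> min (hit (X \<omega>') A) (cens (Ct \<omega>') (R \<omega>') t)} \<omega>"

definition Gn :: "nat \<Rightarrow> real \<Rightarrow> nat set \<Rightarrow> real \<Rightarrow> 'a \<Rightarrow> real" where
  "Gn j t A s \<omega> = Z \<omega> * indicator {\<omega>'. X \<omega>' s = j} \<omega> *
     indicator {\<omega>'. ereal s \<le> min (hit (X \<omega>') A) (cens (Ct \<omega>') (R \<omega>') t)} \<omega>"

lemma Gd_if: "Gd j t A s \<omega> = (if X \<omega> s = j \<and> ereal s \<le> cens (Ct \<omega>) (R \<omega>) t \<and> ereal s \<le> hit (X \<omega>) A
   then 1 else 0)"
  by (auto simp add: Gd_def indicator_def)

lemma Gn_if: "Gn j t A s \<omega> = (if X \<omega> s = j \<and> ereal s \<le> cens (Ct \<omega>) (R \<omega>) t \<and> ereal s \<le> hit (X \<omega>) A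
   then Z \<omega> else 0)"
  by (auto simp add: Gn_def indicator_def)

lemma Gd_joint: "(\<lambda>p. Gd j t A (fst p) (snd p)) \<in> borel_measurable (lborel \<Otimes>\<^sub>M M)"
proof -
  have [measurable]: "fst \<in> borel_measurable (lborel \<Otimes>\<^sub>M M)"
    by (metis measurable_fst measurable_lborel1)
  show ?thesis unfolding Gd_if by measurable
qed

lemma Gn_joint: "(\<lambda>p. Gn j t A (fst p) (snd p)) \<in> borel_measurable (lborel \<Otimes>\<^sub>M M)"
proof -
  have [measurable]: "fst \<in> borel_measurable (lborel \<Otimes>\<^sub>M M)"
    by (metis measurable_fst measurable_lborel1)
  show ?thesis unfolding Gn_if by measurable
qed

definition phi :: "nat \<Rightarrow> real \<Rightarrow> nat set \<Rightarrow> real \<Rightarrow> real" where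
  "phi j t A s = integral\<^sup>L M (Gn j t A s) / integral\<^sup>L M (Gd j t A s)"

lemma phi_meas[measurable]: "phi j t A \<in> borel_measurable borel"
proof -
  have "(\<lambda>s. integral\<^sup>L M (Gn j t A s)) \<in> borel_measurable lborel"
    using borel_measurable_lebesgue_integral[of "\<lambda>s \<omega>. Gn j t A s \<omega>" lborel] Gn_joint[of j t A]
    by (simp add: case_prod_beta)
  moreover have "(\<lambda>s. integral\<^sup>L M (Gd j t A s)) \<in> borel_measurable lborel"
    using borel_measurable_lebesgue_integral[of "\<lambda>s \<omega>. Gd j t A s \<omega>" lborel] Gd_joint[of j t A]
    by (simp add: case_prod_beta)
  ultimately show ?thesis unfolding phi_def[abs_def] by simp
qed

end

locale setting2 = setting +
  assumes mu_def: "\<forall>t s j c. 0 \<le> s \<and> j \<le> l \<and> c \<in> {1..d} \<and> mu_den M X R Ct t j (E c) s \<noteq> 0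
                   \<longrightarrow> mu j (E c) s = mu_num M X Z R Ct t j (E c) s / mu_den M X R Ct t j (E c) s"
    and q_meas: "\<forall>j k. is_transition l lam j k \<longrightarrow> q j k \<in> borel_measurable borel"
    and incr: "\<forall>c\<in>{1..d}. \<forall>j k. is_transition l lam j k \<and> j \<notin> E c \<and> k \<in> E c \<longrightarrow>
                 strict_mono_on {0..} (Vjk M X Z R Ct lam q mu E j k c c)"
begin

lemma mu_den_eq:
  assumes s: "s \<ge> 0" "s \<notin> Dset"
  shows "mu_den M X R Ct t j A s = integral\<^sup>L M (Gd j t A s)"
proof -
  have [measurable]: "(\<lambda>\<omega>. left_val (X \<omega>) s) \<in> measurable M (count_space UNIV)"
    using left_val_meas[OF s(1)] .
  have e: "mu_den M X R Ct t j A s = integral\<^sup>L M (\<lambda>\<omega>. if left_val (X \<omega>) s = j \<and> ereal s \<le> cens (Ct \<omega>) (R \<omega>) t \<and> ereal s \<le> hit (X \<omega>) A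
   then 1 else 0)"
    unfolding mu_den_def by (rule Bochner_Integration.integral_cong) (auto simp: indicator_def)
  show ?thesis unfolding e
  proof (rule integral_cong_AE)
    show "AE \<omega> in M. (if left_val (X \<omega>) s = j \<and> ereal s \<le> cens (Ct \<omega>) (R \<omega>) t \<and> ereal s \<le> hit (X \<omega>) A
      then 1 else 0) = Gd j t A s \<omega>"
      using AE_left[OF s] by eventually_elim (simp add: Gd_if)
  qed (measurable, simp add: Gd_if[abs_def])
qed

lemma mu_num_eq:
  assumes s: "s \<ge> 0" "s \<notin> Dset"
  shows "mu_num M X Z R Ct t j A s = integral\<^sup>L M (Gn j t A s)"
proof -
  have [measurable]: "(\<lambda>\<omega>. left_val (X \<omega>) s) \<in> measurable M (count_space UNIV)"
    using left_val_meas[OF s(1)] .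
  have e: "mu_num M X Z R Ct t j A s = integral\<^sup>L M (\<lambda>\<omega>. if left_val (X \<omega>) s = j \<and> ereal s \<le> cens (Ct \<omega>) (R \<omega>) t \<and> ereal s \<le> hit (X \<omega>) A
   then Z \<omega> else 0)"
    unfolding mu_num_def by (rule Bochner_Integration.integral_cong) (auto simp: indicator_def)
  show ?thesis unfolding e
  proof (rule integral_cong_AE)
    show "AE \<omega> in M. (if left_val (X \<omega>) s = j \<and> ereal s \<le> cens (Ct \<omega>) (R \<omega>) t \<and> ereal s \<le> hit (X \<omega>) A
      then Z \<omega> else 0) = Gn j t A s \<omega>"
      using AE_left[OF s] by eventually_elim (simp add: Gn_if)
  qed (measurable, simp add: Gn_if[abs_def])
qed

lemma pin:
  assumes s: "s \<ge> 0" "s \<notin> Dset" and j: "j \<le> l" and c: "c \<in> {1..d}"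
    and nz: "integral\<^sup>L M (Gd j t (E c) s) \<noteq> 0"
  shows "mu j (E c) s = phi j t (E c) s"
  using mu_def s j c nz mu_den_eq[OF s] mu_num_eq[OF s] unfolding phi_def by metis

lemma Gd_int: "integrable M (Gd j t A s)"
proof (rule integrable_const_bound[where B=1])
  show "AE \<omega> in M. norm (Gd j t A s \<omega>) \<le> 1" by (simp add: Gd_if)
  show "Gd j t A s \<in> borel_measurable M" unfolding Gd_if[abs_def] by measurable
qed

lemma inner_phi:
  assumes s: "s \<ge> 0" "s \<notin> Dset" and j: "j \<le> l" and c: "c1 \<in> {1..d}" "c2 \<in> {1..d}"
  shows "integral\<^sup>L M (Fi j t (E c1 \<union> E c2) (mu j (E c1) s) (mu j (E c2) s) s) =
         integral\<^sup>L M (Fi j t (E c1 \<union> E c2) (phi j t (E c1) s) (phi j t (E c2) s) s)"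
proof (cases "integral\<^sup>L M (Gd j t (E c1 \<union> E c2) s) = 0")
  case True
  have "AE \<omega> in M. Gd j t (E c1 \<union> E c2) s \<omega> = 0"
    using True Gd_int by (subst integral_nonneg_eq_0_iff_AE[symmetric]) (auto simp: Gd_if)
  hence "AE \<omega> in M. Fi j t (E c1 \<union> E c2) a b s \<omega> = 0" for a b
    by eventually_elim (auto simp: Gd_if Fi_if split: if_splits)
  thus ?thesis by (simp add: integral_eq_zero_AE)
next
  case False
  have pos: "integral\<^sup>L M (Gd j t (E c) s) \<noteq> 0" if "c = c1 \<or> c = c2" for c
  proof -
    have "integral\<^sup>L M (Gd j t (E c1 \<union> E c2) s) \<le> integral\<^sup>L M (Gd j t (E c) s)"
      using that by (intro integral_mono Gd_int) (auto simp: Gd_if hit_Un)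
    moreover have "integral\<^sup>L M (Gd j t (E c1 \<union> E c2) s) \<ge> 0"
      by (intro integral_nonneg_AE) (simp add: Gd_if)
    ultimately show ?thesis using False by linarith
  qed
  show ?thesis using pin[OF s j c(1) pos] pin[OF s j c(2) pos] by simp
qed

end

lemma abs_prod_le: "\<bar>x * y\<bar> \<le> (x\<^sup>2 + y\<^sup>2) / (2::real)"
proof -
  have "0 \<le> (\<bar>x\<bar> - \<bar>y\<bar>)\<^sup>2" by simp
  hence "2 * (\<bar>x\<bar> * \<bar>y\<bar>) \<le> \<bar>x\<bar>\<^sup>2 + \<bar>y\<bar>\<^sup>2" by (simp add: power2_eq_square algebra_simps)
  thus ?thesis by (simp add: abs_mult)
qed

context setting2 begin

definition w :: "nat \<Rightarrow> nat \<Rightarrow> real \<Rightarrow> real" where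
  "w j k s = (q j k s)\<^sup>2 * lam j k s"

definition W :: "nat \<Rightarrow> nat \<Rightarrow> real \<Rightarrow> nat \<Rightarrow> nat \<Rightarrow> real \<Rightarrow> real" where
  "W j k t c1 c2 s = indicator {0..t} s *
     (w j k s * integral\<^sup>L M (Fi j t (E c1 \<union> E c2) (mu j (E c1) s) (mu j (E c2) s) s))"

lemma Vjk_W: "Vjk M X Z R Ct lam q mu E j k c1 c2 t = integral\<^sup>L lborel (W j k t c1 c2)"
  unfolding Vjk_def set_lebesgue_integral_def W_def w_def Fi_def by simp

lemma lam_props:
  assumes "is_transition l lam j k"
  shows "lam j k \<in> borel_measurable borel" "\<And>s. s \<ge> 0 \<Longrightarrow> lam j k s \<ge> 0"
  using assms markov unfolding is_transition_def markov_intensities_def by blast+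

lemma w_meas: assumes tr: "is_transition l lam j k" shows "w j k \<in> borel_measurable borel"
proof -
  have [measurable]: "lam j k \<in> borel_measurable borel" "q j k \<in> borel_measurable borel"
    using lam_props(1)[OF tr] q_meas tr by auto
  show ?thesis unfolding w_def[abs_def] by measurable
qed

lemma w_nonneg: "is_transition l lam j k \<Longrightarrow> s \<ge> 0 \<Longrightarrow> w j k s \<ge> 0"
  using lam_props(2) unfolding w_def by simp

lemma W_meas:
  assumes tr: "is_transition l lam j k" and c: "c1 \<in> {1..d}" "c2 \<in> {1..d}"
  shows "W j k t c1 c2 \<in> borel_measurable lborel"
proof (rule measurable_discrete_difference[where X=Dset])
  have [measurable]: "w j k \<in> borel_measurable borel" by (rule w_meas[OF tr])
  have [measurable]: "(\<lambda>s. integral\<^sup>L M (Fi j t (E c1 \<union> E c2) (phi j t (E c1) s) (phi j t (E c2) s) s)) \<in> borel_measurable lborel"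
    by (intro inner_meas phi_meas)
  show "(\<lambda>s. indicator {0..t} s * (w j k s * integral\<^sup>L M (Fi j t (E c1 \<union> E c2) (phi j t (E c1) s) (phi j t (E c2) s) s)))
     \<in> borel_measurable lborel" by measurable
  show "countable Dset" by (rule countable_Dset)
  have j: "j \<le> l" using tr unfolding is_transition_def by simp
  fix s assume "s \<notin> Dset"
  thus "indicator {0..t} s * (w j k s * integral\<^sup>L M (Fi j t (E c1 \<union> E c2) (phi j t (E c1) s) (phi j t (E c2) s) s)) =
     W j k t c1 c2 s"
    unfolding W_def using inner_phi[OF _ _ j c] by (cases "s \<in> {0..t}") auto
qed auto

lemma W_zero: "W j k 0 c1 c2 \<in> borel_measurable lborel \<Longrightarrow> integrable lborel (W j k 0 c1 c2) \<and> integral\<^sup>L lborel (W j k 0 c1 c2) = 0"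
proof -
  assume m: "W j k 0 c1 c2 \<in> borel_measurable lborel"
  have ae: "AE s in lborel. W j k 0 c1 c2 s = 0"
    using AE_lborel_singleton[of 0] by eventually_elim (simp add: W_def)
  have "integrable lborel (W j k 0 c1 c2) \<longleftrightarrow> integrable lborel (\<lambda>_. 0::real)"
    using integrable_cong_AE[OF m _ ae] by simp
  thus ?thesis using ae by (simp add: integral_eq_zero_AE)
qed

definition good :: "nat \<Rightarrow> nat \<Rightarrow> nat \<Rightarrow> bool" where
  "good j k c \<longleftrightarrow> c \<in> {1..d} \<and> is_transition l lam j k \<and> j \<notin> E c \<and> k \<in> E c"

lemma diag_int:
  assumes g: "good j k c" and t: "t \<ge> 0"
  shows "integrable lborel (W j k t c c)"
proof -
  have tr: "is_transition l lam j k" and c: "c \<in> {1..d}" using g by (auto simp: good_def)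
  show ?thesis
  proof (cases "t = 0")
    case True thus ?thesis using W_zero W_meas[OF tr c c] by simp
  next
    case False
    hence tpos: "t > 0" using t by simp
    have sm: "strict_mono_on {0..} (Vjk M X Z R Ct lam q mu E j k c c)"
      using incr g unfolding good_def by blast
    have "Vjk M X Z R Ct lam q mu E j k c c 0 < Vjk M X Z R Ct lam q mu E j k c c t"
      using sm tpos by (intro strict_mono_onD[OF sm]) auto
    moreover have "Vjk M X Z R Ct lam q mu E j k c c 0 = 0"
      unfolding Vjk_W using W_zero W_meas[OF tr c c] by simp
    ultimately have "integral\<^sup>L lborel (W j k t c c) \<noteq> 0" unfolding Vjk_W by simp
    thus ?thesis using not_integrable_integral_eq by blast
  qed
qed

lemma Fi_bound:
  "\<bar>Fi j t (E c1 \<union> E c2) a b s \<omega>\<bar> \<le> (Fi j t (E c1 \<union> E c1) a a s \<omega> + Fi j t (E c2 \<union> E c2) b b s \<omega>) / 2"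
proof -
  have "\<bar>(Z \<omega> - a) * (Z \<omega> - b)\<bar> \<le> ((Z \<omega> - a)\<^sup>2 + (Z \<omega> - b)\<^sup>2) / 2" by (rule abs_prod_le)
  thus ?thesis by (auto simp: Fi_if hit_Un power2_eq_square)
qed

lemma Fi_diag_nonneg: "Fi j t A a a s \<omega> \<ge> 0"
  by (simp add: Fi_if)

lemma inner_bound:
  "\<bar>integral\<^sup>L M (Fi j t (E c1 \<union> E c2) a b s)\<bar> \<le>
    (integral\<^sup>L M (Fi j t (E c1 \<union> E c1) a a s) + integral\<^sup>L M (Fi j t (E c2 \<union> E c2) b b s)) / 2"
proof -
  have "\<bar>integral\<^sup>L M (Fi j t (E c1 \<union> E c2) a b s)\<bar> \<le> integral\<^sup>L M (\<lambda>\<omega>. \<bar>Fi j t (E c1 \<union> E c2) a b s \<omega>\<bar>)"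
    by (rule integral_abs_bound)
  also have "\<dots> \<le> integral\<^sup>L M (\<lambda>\<omega>. (Fi j t (E c1 \<union> E c1) a a s \<omega> + Fi j t (E c2 \<union> E c2) b b s \<omega>) / 2)"
    by (intro integral_mono Fi_bound integrable_abs Fi_int integrable_divide Bochner_Integration.integrable_add)
  also have "\<dots> = (integral\<^sup>L M (Fi j t (E c1 \<union> E c1) a a s) + integral\<^sup>L M (Fi j t (E c2 \<union> E c2) b b s)) / 2"
    using Bochner_Integration.integral_add[OF Fi_int Fi_int, of j t "E c1 \<union> E c1" a a s j t "E c2 \<union> E c2" b b s] by simp
  finally show ?thesis .
qed

lemma inner_diag_nonneg: "integral\<^sup>L M (Fi j t A a a s) \<ge> 0"
  by (intro integral_nonneg_AE) (simp add: Fi_diag_nonneg)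

lemma W_int:
  assumes g: "good j k c1" "good j k c2" and t: "t \<ge> 0"
  shows "integrable lborel (W j k t c1 c2)"
proof (rule Bochner_Integration.integrable_bound)
  have tr: "is_transition l lam j k" and c: "c1 \<in> {1..d}" "c2 \<in> {1..d}" using g by (auto simp: good_def)
  show "integrable lborel (\<lambda>s. (W j k t c1 c1 s + W j k t c2 c2 s) / 2)"
    using diag_int[OF g(1) t] diag_int[OF g(2) t] by simp
  show "W j k t c1 c2 \<in> borel_measurable lborel" by (rule W_meas[OF tr c])
  show "AE s in lborel. norm (W j k t c1 c2 s) \<le> norm ((W j k t c1 c1 s + W j k t c2 c2 s) / 2)"
  proof (rule AE_I2)
    fix s
    show "norm (W j k t c1 c2 s) \<le> norm ((W j k t c1 c1 s + W j k t c2 c2 s) / 2)"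
    proof (cases "s \<in> {0..t}")
      case False thus ?thesis by (simp add: W_def)
    next
      case True
      hence ws: "w j k s \<ge> 0" using w_nonneg[OF tr] by simp
      let ?a = "mu j (E c1) s" and ?b = "mu j (E c2) s"
      have "\<bar>w j k s * integral\<^sup>L M (Fi j t (E c1 \<union> E c2) ?a ?b s)\<bar> \<le>
         w j k s * ((integral\<^sup>L M (Fi j t (E c1 \<union> E c1) ?a ?a s) + integral\<^sup>L M (Fi j t (E c2 \<union> E c2) ?b ?b s)) / 2)"
        unfolding abs_mult abs_of_nonneg[OF ws] using ws by (intro mult_left_mono inner_bound) auto
      moreover have "0 \<le> w j k s * ((integral\<^sup>L M (Fi j t (E c1 \<union> E c1) ?a ?a s) + integral\<^sup>L M (Fi j t (E c2 \<union> E c2) ?b ?b s)) / 2)"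
        using ws inner_diag_nonneg by simp
      ultimately show ?thesis using True by (simp add: W_def algebra_simps)
    qed
  qed
qed

end

context setting2 begin

lemma Fi_sum_sq:
  fixes T :: "nat set"
  shows "(\<Sum>c1\<in>T. \<Sum>c2\<in>T. x c1 * x c2 * Fi j t (E c1 \<union> E c2) (mu j (E c1) s) (mu j (E c2) s) s \<omega>) =
    (if X \<omega> s = j \<and> ereal s \<le> cens (Ct \<omega>) (R \<omega>) t then 1 else 0) *
    (\<Sum>c\<in>T. x c * (if ereal s \<le> hit (X \<omega>) (E c) then 1 else 0) * (Z \<omega> - mu j (E c) s))\<^sup>2"
proof -
  let ?g = "(if X \<omega> s = j \<and> ereal s \<le> cens (Ct \<omega>) (R \<omega>) t then 1 else 0) :: real"
  let ?y = "\<lambda>c. x c * (if ereal s \<le> hit (X \<omega>) (E c) then 1 else 0) * (Z \<omega> - mu j (E c) s)"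
  have e: "x c1 * x c2 * Fi j t (E c1 \<union> E c2) (mu j (E c1) s) (mu j (E c2) s) s \<omega> = ?g * (?y c1 * ?y c2)" for c1 c2
    by (simp add: Fi_if hit_Un)
  have "(\<Sum>c1\<in>T. \<Sum>c2\<in>T. x c1 * x c2 * Fi j t (E c1 \<union> E c2) (mu j (E c1) s) (mu j (E c2) s) s \<omega>) =
     (\<Sum>c1\<in>T. \<Sum>c2\<in>T. ?g * (?y c1 * ?y c2))" by (intro sum.cong refl e)
  also have "\<dots> = ?g * (\<Sum>c1\<in>T. \<Sum>c2\<in>T. ?y c1 * ?y c2)" by (simp only: sum_distrib_left)
  also have "\<dots> = ?g * ((\<Sum>c\<in>T. ?y c) * (\<Sum>c\<in>T. ?y c))" by (simp only: sum_product)
  finally show ?thesis by (simp add: power2_eq_square)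
qed

definition S :: "nat \<Rightarrow> nat set \<Rightarrow> (nat \<Rightarrow> real) \<Rightarrow> real \<Rightarrow> real \<Rightarrow> real" where
  "S j T x t s = (\<Sum>c1\<in>T. \<Sum>c2\<in>T. x c1 * x c2 * integral\<^sup>L M (Fi j t (E c1 \<union> E c2) (mu j (E c1) s) (mu j (E c2) s) s))"

lemma int_inner: "integrable M (\<lambda>\<omega>. x c1 * x c2 * Fi j t (E c1 \<union> E c2) (mu j (E c1) s) (mu j (E c2) s) s \<omega>)"
  by (rule integrable_mult_right[OF Fi_int])

lemma int_row: "integrable M (\<lambda>\<omega>. \<Sum>c2\<in>T. x c1 * x c2 * Fi j t (E c1 \<union> E c2) (mu j (E c1) s) (mu j (E c2) s) s \<omega>)"
  by (rule Bochner_Integration.integrable_sum) (rule int_inner)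

lemma S_int:
  "integrable M (\<lambda>\<omega>. \<Sum>c1\<in>T. \<Sum>c2\<in>T. x c1 * x c2 * Fi j t (E c1 \<union> E c2) (mu j (E c1) s) (mu j (E c2) s) s \<omega>)"
  by (rule Bochner_Integration.integrable_sum) (rule int_row)

lemma S_integral:
  "S j T x t s = integral\<^sup>L M (\<lambda>\<omega>. \<Sum>c1\<in>T. \<Sum>c2\<in>T. x c1 * x c2 * Fi j t (E c1 \<union> E c2) (mu j (E c1) s) (mu j (E c2) s) s \<omega>)"
proof -
  have "integral\<^sup>L M (\<lambda>\<omega>. \<Sum>c1\<in>T. \<Sum>c2\<in>T. x c1 * x c2 * Fi j t (E c1 \<union> E c2) (mu j (E c1) s) (mu j (E c2) s) s \<omega>)
    = (\<Sum>c1\<in>T. integral\<^sup>L M (\<lambda>\<omega>. \<Sum>c2\<in>T. x c1 * x c2 * Fi j t (E c1 \<union> E c2) (mu j (E c1) s) (mu j (E c2) s) s \<omega>))"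
    by (rule Bochner_Integration.integral_sum) (rule int_row)
  also have "\<dots> = (\<Sum>c1\<in>T. \<Sum>c2\<in>T. integral\<^sup>L M (\<lambda>\<omega>. x c1 * x c2 * Fi j t (E c1 \<union> E c2) (mu j (E c1) s) (mu j (E c2) s) s \<omega>))"
    by (rule sum.cong[OF refl], rule Bochner_Integration.integral_sum) (rule int_inner)
  also have "\<dots> = S j T x t s" unfolding S_def by simp
  finally show ?thesis by simp
qed

lemma S_nonneg: "S j T x t s \<ge> 0"
  unfolding S_integral by (intro integral_nonneg_AE AE_I2) (simp add: Fi_sum_sq)

lemma S_mono: "t1 \<le> t2 \<Longrightarrow> S j T x t1 s \<le> S j T x t2 s"
  unfolding S_integral
proof (intro integral_mono S_int)
  fix \<omega> assume "t1 \<le> t2"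
  hence "cens (Ct \<omega>) (R \<omega>) t1 \<le> cens (Ct \<omega>) (R \<omega>) t2" by (rule cens_mono)
  thus "(\<Sum>c1\<in>T. \<Sum>c2\<in>T. x c1 * x c2 * Fi j t1 (E c1 \<union> E c2) (mu j (E c1) s) (mu j (E c2) s) s \<omega>)
         \<le> (\<Sum>c1\<in>T. \<Sum>c2\<in>T. x c1 * x c2 * Fi j t2 (E c1 \<union> E c2) (mu j (E c1) s) (mu j (E c2) s) s \<omega>)"
    unfolding Fi_sum_sq by (auto intro: order_trans)
qed

lemma W_sum: "(\<Sum>c1\<in>T. \<Sum>c2\<in>T. x c1 * x c2 * W j k t c1 c2 s) = indicator {0..t} s * (w j k s * S j T x t s)"
  unfolding W_def S_def by (simp add: sum_distrib_left mult_ac)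

lemma Qjk_nonneg:
  assumes tr: "is_transition l lam j k" and fin: "finite T" and g: "\<forall>c\<in>T. good j k c"
    and t: "0 \<le> t1" "t1 \<le> t2"
  shows "0 \<le> (\<Sum>c1\<in>T. \<Sum>c2\<in>T. x c1 * x c2 *
     (Vjk M X Z R Ct lam q mu E j k c1 c2 t2 - Vjk M X Z R Ct lam q mu E j k c1 c2 t1))"
proof -
  have int: "integrable lborel (W j k t c1 c2)" if "c1 \<in> T" "c2 \<in> T" "t \<ge> 0" for c1 c2 t
    using W_int g that by blast
  have "(\<Sum>c1\<in>T. \<Sum>c2\<in>T. x c1 * x c2 *
     (Vjk M X Z R Ct lam q mu E j k c1 c2 t2 - Vjk M X Z R Ct lam q mu E j k c1 c2 t1)) =
     (\<Sum>c1\<in>T. \<Sum>c2\<in>T. integral\<^sup>L lborel (\<lambda>s. x c1 * x c2 * (W j k t2 c1 c2 s - W j k t1 c1 c2 s)))"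
    unfolding Vjk_W using int t
    by (intro sum.cong refl) (simp add: Bochner_Integration.integral_diff)
  also have "\<dots> = integral\<^sup>L lborel (\<lambda>s. \<Sum>c1\<in>T. \<Sum>c2\<in>T. x c1 * x c2 * (W j k t2 c1 c2 s - W j k t1 c1 c2 s))"
  proof -
    have i1: "integrable lborel (\<lambda>s. x c1 * x c2 * (W j k t2 c1 c2 s - W j k t1 c1 c2 s))"
      if "c1 \<in> T" "c2 \<in> T" for c1 c2
      by (rule integrable_mult_right, rule Bochner_Integration.integrable_diff) (use int that t in auto)
    have i2: "integrable lborel (\<lambda>s. \<Sum>c2\<in>T. x c1 * x c2 * (W j k t2 c1 c2 s - W j k t1 c1 c2 s))"
      if "c1 \<in> T" for c1
      by (rule Bochner_Integration.integrable_sum) (use i1 that in auto)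
    have "integral\<^sup>L lborel (\<lambda>s. \<Sum>c1\<in>T. \<Sum>c2\<in>T. x c1 * x c2 * (W j k t2 c1 c2 s - W j k t1 c1 c2 s))
      = (\<Sum>c1\<in>T. integral\<^sup>L lborel (\<lambda>s. \<Sum>c2\<in>T. x c1 * x c2 * (W j k t2 c1 c2 s - W j k t1 c1 c2 s)))"
      by (rule Bochner_Integration.integral_sum) (rule i2)
    also have "\<dots> = (\<Sum>c1\<in>T. \<Sum>c2\<in>T. integral\<^sup>L lborel (\<lambda>s. x c1 * x c2 * (W j k t2 c1 c2 s - W j k t1 c1 c2 s)))"
      by (rule sum.cong[OF refl], rule Bochner_Integration.integral_sum) (rule i1)
    finally show ?thesis by simp
  qed
  also have "\<dots> \<ge> 0"
  proof (rule Bochner_Integration.integral_nonneg)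
    fix s :: real
    have e: "(\<Sum>c1\<in>T. \<Sum>c2\<in>T. x c1 * x c2 * (W j k t2 c1 c2 s - W j k t1 c1 c2 s)) =
      indicator {0..t2} s * (w j k s * S j T x t2 s) - indicator {0..t1} s * (w j k s * S j T x t1 s)"
      unfolding W_sum[symmetric] by (simp add: right_diff_distrib sum_subtractf)
    show "0 \<le> (\<Sum>c1\<in>T. \<Sum>c2\<in>T. x c1 * x c2 * (W j k t2 c1 c2 s - W j k t1 c1 c2 s))"
      unfolding e
    proof (cases "0 \<le> s")
      case True
      have ws: "w j k s \<ge> 0" using w_nonneg[OF tr True] .
      have S0: "S j T x t1 s \<ge> 0" "S j T x t2 s \<ge> 0" by (rule S_nonneg)+
      have Sm: "S j T x t1 s \<le> S j T x t2 s" by (rule S_mono[OF t(2)])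
      have "w j k s * S j T x t1 s \<le> w j k s * S j T x t2 s" using Sm ws by (rule mult_left_mono)
      moreover have "0 \<le> w j k s * S j T x t2 s" using ws S0 by simp
      ultimately show "0 \<le> indicator {0..t2} s * (w j k s * S j T x t2 s) - indicator {0..t1} s * (w j k s * S j T x t1 s)"
        using True t by (auto simp: indicator_def)
    qed (simp add: indicator_def)
  qed
  finally show ?thesis .
qed

end

lemma swap4:
  "(\<Sum>a\<in>A. \<Sum>b\<in>B. \<Sum>c\<in>C. \<Sum>d\<in>D. f a b c d) = (\<Sum>c\<in>C. \<Sum>d\<in>D. \<Sum>a\<in>A. \<Sum>b\<in>B. f a b c d)"
proof -
  have "(\<Sum>a\<in>A. \<Sum>b\<in>B. \<Sum>c\<in>C. \<Sum>d\<in>D. f a b c d) = (\<Sum>a\<in>A. \<Sum>c\<in>C. \<Sum>b\<in>B. \<Sum>d\<in>D. f a b c d)"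
    by (rule sum.cong[OF refl], rule sum.swap)
  also have "\<dots> = (\<Sum>a\<in>A. \<Sum>c\<in>C. \<Sum>d\<in>D. \<Sum>b\<in>B. f a b c d)"
    by (rule sum.cong[OF refl], rule sum.cong[OF refl], rule sum.swap)
  also have "\<dots> = (\<Sum>c\<in>C. \<Sum>a\<in>A. \<Sum>d\<in>D. \<Sum>b\<in>B. f a b c d)"
    by (rule sum.swap)
  also have "\<dots> = (\<Sum>c\<in>C. \<Sum>d\<in>D. \<Sum>a\<in>A. \<Sum>b\<in>B. f a b c d)"
    by (rule sum.cong[OF refl], rule sum.swap)
  finally show ?thesis .
qed

context setting2 begin

definition cnd :: "nat \<Rightarrow> nat \<Rightarrow> nat \<Rightarrow> bool" where
  "cnd j k c \<longleftrightarrow> k \<in> E c \<and> j \<notin> E c \<and> is_transition l lam j k"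

lemma Vent_eq:
  "Vent M X Z R Ct l lam q mu E c1 c2 t =
    (\<Sum>k\<in>{..l}. \<Sum>j\<in>{..l}. if cnd j k c1 \<and> cnd j k c2 then Vjk M X Z R Ct lam q mu E j k c1 c2 t else 0)"
proof -
  have "Vent M X Z R Ct l lam q mu E c1 c2 t =
    (\<Sum>k\<in>{k\<in>{..l}. k \<in> E c1 \<inter> E c2}. \<Sum>j\<in>{j\<in>{..l}. j \<notin> E c1 \<union> E c2 \<and> is_transition l lam j k}.
       Vjk M X Z R Ct lam q mu E j k c1 c2 t)"
    unfolding Vent_def by (intro sum.cong) auto
  also have "\<dots> = (\<Sum>k\<in>{..l}. if k \<in> E c1 \<inter> E c2 then (\<Sum>j\<in>{..l}. if j \<notin> E c1 \<union> E c2 \<and> is_transition l lam j k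
       then Vjk M X Z R Ct lam q mu E j k c1 c2 t else 0) else 0)"
    by (simp only: sum.inter_filter[OF finite_atMost])
  also have "\<dots> = (\<Sum>k\<in>{..l}. \<Sum>j\<in>{..l}. if cnd j k c1 \<and> cnd j k c2 then Vjk M X Z R Ct lam q mu E j k c1 c2 t else 0)"
    by (rule sum.cong[OF refl]) (auto simp: cnd_def intro!: sum.cong)
  finally show ?thesis .
qed

lemma main_core:
  assumes I: "I \<subseteq> {1..d}" and t: "0 \<le> t1" "t1 < t2"
    and H: "\<forall>c1\<in>I. (\<Sum>c2\<in>I. (Vent M X Z R Ct l lam q mu E c1 c2 t2 - Vent M X Z R Ct l lam q mu E c1 c2 t1) * x c2) = 0"
    and I1: "I1 \<subseteq> I" and excl: "\<forall>c\<in>I1. \<exists>j k. exclusive l lam E I c j k"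
  shows "\<forall>c\<in>I1. x c = 0"
proof -
  define V' where "V' j k c1 c2 t = Vjk M X Z R Ct lam q mu E j k c1 c2 t" for j k c1 c2 t
  define T where "T j k = {c\<in>I. cnd j k c}" for j k
  define Q where "Q j k = (\<Sum>c1\<in>T j k. \<Sum>c2\<in>T j k. x c1 * x c2 * (V' j k c1 c2 t2 - V' j k c1 c2 t1))" for j k
  have finI: "finite I" using I finite_subset by blast
  have Qnn: "Q j k \<ge> 0" for j k
  proof (cases "is_transition l lam j k")
    case True
    show ?thesis unfolding Q_def V'_def
      by (rule Qjk_nonneg[OF True]) (use finI t I in \<open>auto simp: T_def good_def cnd_def\<close>)
  next
    case False
    hence "T j k = {}" by (auto simp: T_def cnd_def)
    thus ?thesis by (simp add: Q_def)
  qed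
  have "0 = (\<Sum>c1\<in>I. x c1 * (\<Sum>c2\<in>I. (Vent M X Z R Ct l lam q mu E c1 c2 t2 - Vent M X Z R Ct l lam q mu E c1 c2 t1) * x c2))"
    using H by simp
  also have "\<dots> = (\<Sum>c1\<in>I. \<Sum>c2\<in>I. \<Sum>k\<in>{..l}. \<Sum>j\<in>{..l}.
      x c1 * x c2 * (if cnd j k c1 \<and> cnd j k c2 then V' j k c1 c2 t2 - V' j k c1 c2 t1 else 0))"
  proof (rule sum.cong[OF refl])
    fix c1 assume "c1 \<in> I"
    have "x c1 * (\<Sum>c2\<in>I. (Vent M X Z R Ct l lam q mu E c1 c2 t2 - Vent M X Z R Ct l lam q mu E c1 c2 t1) * x c2)
      = (\<Sum>c2\<in>I. (x c1 * x c2) * (Vent M X Z R Ct l lam q mu E c1 c2 t2 - Vent M X Z R Ct l lam q mu E c1 c2 t1))"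
      by (simp add: sum_distrib_left mult_ac)
    also have "\<dots> = (\<Sum>c2\<in>I. (x c1 * x c2) * (\<Sum>k\<in>{..l}. \<Sum>j\<in>{..l}.
      (if cnd j k c1 \<and> cnd j k c2 then V' j k c1 c2 t2 - V' j k c1 c2 t1 else 0)))"
    proof (rule sum.cong[OF refl])
      fix c2
      have "Vent M X Z R Ct l lam q mu E c1 c2 t2 - Vent M X Z R Ct l lam q mu E c1 c2 t1 =
        (\<Sum>k\<in>{..l}. \<Sum>j\<in>{..l}. (if cnd j k c1 \<and> cnd j k c2 then V' j k c1 c2 t2 else 0)
           - (if cnd j k c1 \<and> cnd j k c2 then V' j k c1 c2 t1 else 0))"
        unfolding Vent_eq V'_def by (simp only: sum_subtractf)
      also have "\<dots> = (\<Sum>k\<in>{..l}. \<Sum>j\<in>{..l}.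
        (if cnd j k c1 \<and> cnd j k c2 then V' j k c1 c2 t2 - V' j k c1 c2 t1 else 0))"
        by (intro sum.cong refl) simp
      finally show "(x c1 * x c2) * (Vent M X Z R Ct l lam q mu E c1 c2 t2 - Vent M X Z R Ct l lam q mu E c1 c2 t1) =
        (x c1 * x c2) * (\<Sum>k\<in>{..l}. \<Sum>j\<in>{..l}.
      (if cnd j k c1 \<and> cnd j k c2 then V' j k c1 c2 t2 - V' j k c1 c2 t1 else 0))" by simp
    qed
    also have "\<dots> = (\<Sum>c2\<in>I. \<Sum>k\<in>{..l}. \<Sum>j\<in>{..l}.
      x c1 * x c2 * (if cnd j k c1 \<and> cnd j k c2 then V' j k c1 c2 t2 - V' j k c1 c2 t1 else 0))"
      by (simp only: sum_distrib_left)
    finally show "x c1 * (\<Sum>c2\<in>I. (Vent M X Z R Ct l lam q mu E c1 c2 t2 - Vent M X Z R Ct l lam q mu E c1 c2 t1) * x c2)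
      = (\<Sum>c2\<in>I. \<Sum>k\<in>{..l}. \<Sum>j\<in>{..l}.
      x c1 * x c2 * (if cnd j k c1 \<and> cnd j k c2 then V' j k c1 c2 t2 - V' j k c1 c2 t1 else 0))" .
  qed
  also have "\<dots> = (\<Sum>k\<in>{..l}. \<Sum>j\<in>{..l}. \<Sum>c1\<in>I. \<Sum>c2\<in>I.
      x c1 * x c2 * (if cnd j k c1 \<and> cnd j k c2 then V' j k c1 c2 t2 - V' j k c1 c2 t1 else 0))"
    by (rule swap4)
  also have "\<dots> = (\<Sum>k\<in>{..l}. \<Sum>j\<in>{..l}. Q j k)"
  proof (intro sum.cong refl)
    fix k j
    have "(\<Sum>c1\<in>I. \<Sum>c2\<in>I. x c1 * x c2 * (if cnd j k c1 \<and> cnd j k c2 then V' j k c1 c2 t2 - V' j k c1 c2 t1 else 0))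
      = (\<Sum>c1\<in>I. if cnd j k c1 then (\<Sum>c2\<in>I. if cnd j k c2 then x c1 * x c2 * (V' j k c1 c2 t2 - V' j k c1 c2 t1) else 0) else 0)"
      by (rule sum.cong[OF refl]) (auto intro!: sum.cong)
    also have "\<dots> = Q j k"
      unfolding Q_def T_def using finI by (simp add: sum.inter_filter)
    finally show "(\<Sum>c1\<in>I. \<Sum>c2\<in>I. x c1 * x c2 * (if cnd j k c1 \<and> cnd j k c2 then V' j k c1 c2 t2 - V' j k c1 c2 t1 else 0))
      = Q j k" .
  qed
  finally have Qsum: "(\<Sum>k\<in>{..l}. \<Sum>j\<in>{..l}. Q j k) = 0" by simp
  have Q0: "Q j k = 0" if "j \<le> l" "k \<le> l" for j k
  proof -
    have "\<forall>k\<in>{..l}. (\<Sum>j\<in>{..l}. Q j k) = 0"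
      using Qsum by (subst sum_nonneg_eq_0_iff[symmetric]) (auto intro: sum_nonneg Qnn)
    hence "(\<Sum>j\<in>{..l}. Q j k) = 0" using that by simp
    hence "\<forall>j\<in>{..l}. Q j k = 0" by (subst sum_nonneg_eq_0_iff[symmetric]) (auto intro: Qnn)
    thus ?thesis using that by simp
  qed
  show ?thesis
  proof
    fix c assume c: "c \<in> I1"
    then obtain j k where ex: "exclusive l lam E I c j k" using excl by blast
    have tr: "is_transition l lam j k" and jk: "j \<le> l" "k \<le> l" and jc: "j \<notin> E c" "k \<in> E c"
      using ex by (auto simp: exclusive_def is_transition_def)
    have cI: "c \<in> I" using c I1 by auto
    have Tjk: "T j k = {c}"
      using ex cI unfolding T_def cnd_def exclusive_def by auto
    have "Q j k = x c * x c * (V' j k c c t2 - V' j k c c t1)" by (simp add: Q_def Tjk)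
    moreover have "V' j k c c t1 < V' j k c c t2"
    proof -
      have "strict_mono_on {0..} (Vjk M X Z R Ct lam q mu E j k c c)"
        using incr cI I tr jc by blast
      thus ?thesis unfolding V'_def using t by (elim strict_mono_onD) auto
    qed
    ultimately have "x c * x c = 0" using Q0[OF jk] by simp
    thus "x c = 0" by simp
  qed
qed

end

theorem lemma4:
  fixes M :: "'a measure" and X :: "'a \<Rightarrow> real \<Rightarrow> nat"
    and Z R :: "'a \<Rightarrow> real" and Ct :: "'a \<Rightarrow> ereal"
    and l d :: nat and lam q :: "nat \<Rightarrow> nat \<Rightarrow> real \<Rightarrow> real"
    and mu :: "nat \<Rightarrow> nat set \<Rightarrow> real \<Rightarrow> real"
    and E :: "nat \<Rightarrow> nat set" and I :: "nat set"
  assumes prob: "prob_space M"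
    and markov: "markov_intensities M X l lam"
    and X_meas: "(\<lambda>(\<omega>, s). X \<omega> s) \<in> measurable (M \<Otimes>\<^sub>M lborel) (count_space UNIV)"
    and Z_meas: "Z \<in> borel_measurable M" and Z01: "\<forall>\<omega>\<in>space M. Z \<omega> \<in> {0, 1}"
    and R_meas: "R \<in> borel_measurable M" and Ct_meas: "Ct \<in> borel_measurable M"
    and indep: "prob_space.indep_set M
                  (sets (vimage_algebra (space M) X (Pi\<^sub>M UNIV (\<lambda>_. count_space UNIV))))
                  (sets (vimage_algebra (space M) (\<lambda>\<omega>. (R \<omega>, Z \<omega>, Ct \<omega>))
                          (borel \<Otimes>\<^sub>M borel \<Otimes>\<^sub>M borel)))"
    and mu_def: "\<forall>t s j c. 0 \<le> s \<and> j \<le> l \<and> c \<in> {1..d} \<and> mu_den M X R Ct t j (E c) s \<noteq> 0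
                   \<longrightarrow> mu j (E c) s = mu_num M X Z R Ct t j (E c) s / mu_den M X R Ct t j (E c) s"
    and q_meas: "\<forall>j k. is_transition l lam j k \<longrightarrow> q j k \<in> borel_measurable borel"
    and q_int: "\<forall>j k t. is_transition l lam j k \<longrightarrow> set_integrable lborel {0..t} (\<lambda>s. (q j k s)\<^sup>2 * lam j k s)"
    and E_sub: "\<forall>c\<in>{1..d}. E c \<subseteq> {1..l}"
    and I_sub: "I \<subseteq> {1..d}"
    and incr: "\<forall>c\<in>{1..d}. \<forall>j k. is_transition l lam j k \<and> j \<notin> E c \<and> k \<in> E c \<longrightarrow>
                 strict_mono_on {0..} (Vjk M X Z R Ct lam q mu E j k c c)"
    and cond: "(\<forall>c\<in>I. \<exists>j k. exclusive l lam E I c j k) \<or>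
               (\<exists>I1 I2. I1 \<inter> I2 = {} \<and> I = I1 \<union> I2 \<and>
                  (\<forall>c\<in>I1. \<exists>j k. exclusive l lam E I c j k) \<and>
                  (\<forall>t1 t2. 0 \<le> t1 \<and> t1 < t2 \<longrightarrow>
                     invertible_mat (submat_idx I2 (\<lambda>c1 c2. Vent M X Z R Ct l lam q mu E c1 c2 t2)
                                     - submat_idx I2 (\<lambda>c1 c2. Vent M X Z R Ct l lam q mu E c1 c2 t1))))"
  shows "\<forall>t1 t2. 0 \<le> t1 \<and> t1 < t2 \<longrightarrow>
           invertible_mat (submat_idx I (\<lambda>c1 c2. Vent M X Z R Ct l lam q mu E c1 c2 t2)
                           - submat_idx I (\<lambda>c1 c2. Vent M X Z R Ct l lam q mu E c1 c2 t1))"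
proof -
  have st: "setting2 M X Z R Ct l d lam q mu E"
    unfolding setting2_def setting2_axioms_def setting_def setting_axioms_def
    using prob markov X_meas Z_meas Z01 R_meas Ct_meas mu_def q_meas incr by auto
  interpret setting2 M X Z R Ct l d lam q mu E by (rule st)
  have finI: "finite I" using I_sub finite_subset by blast
  show ?thesis
  proof (intro allI impI)
    fix t1 t2 :: real assume t: "0 \<le> t1 \<and> t1 < t2"
    let ?A1 = "\<lambda>c1 c2. Vent M X Z R Ct l lam q mu E c1 c2 t1"
    let ?A2 = "\<lambda>c1 c2. Vent M X Z R Ct l lam q mu E c1 c2 t2"
    obtain I1 I2 where I12: "I1 \<inter> I2 = {}" "I = I1 \<union> I2" "\<forall>c\<in>I1. \<exists>j k. exclusive l lam E I c j k"
      and inv2: "I2 = {} \<or> invertible_mat (submat_idx I2 ?A2 - submat_idx I2 ?A1)"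
    proof (cases "\<forall>c\<in>I. \<exists>j k. exclusive l lam E I c j k")
      case True
      show ?thesis by (rule that[of I "{}"]) (use True in auto)
    next
      case False
      then obtain I1 I2 where "I1 \<inter> I2 = {} \<and> I = I1 \<union> I2 \<and>
                  (\<forall>c\<in>I1. \<exists>j k. exclusive l lam E I c j k) \<and>
                  (\<forall>t1 t2. 0 \<le> t1 \<and> t1 < t2 \<longrightarrow>
                     invertible_mat (submat_idx I2 (\<lambda>c1 c2. Vent M X Z R Ct l lam q mu E c1 c2 t2)
                                     - submat_idx I2 (\<lambda>c1 c2. Vent M X Z R Ct l lam q mu E c1 c2 t1)))"
        using cond by blast
      thus ?thesis using t by (intro that[of I1 I2]) auto
    qed
    show "invertible_mat (submat_idx I ?A2 - submat_idx I ?A1)"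
    proof (rule key_matrix[OF finI])
      fix x assume H: "\<forall>c1\<in>I. (\<Sum>c2\<in>I. (?A2 c1 c2 - ?A1 c1 c2) * x c2) = 0"
      have x1: "\<forall>c\<in>I1. x c = 0"
        by (rule main_core[OF I_sub _ _ H]) (use t I12 in auto)
      have x2: "\<forall>c\<in>I2. x c = 0"
      proof (cases "I2 = {}")
        case True thus ?thesis by simp
      next
        case False
        hence inv: "invertible_mat (submat_idx I2 ?A2 - submat_idx I2 ?A1)" using inv2 by simp
        have fin12: "finite I1" "finite I2" using finI I12(2) by auto
        have "\<forall>c1\<in>I2. (\<Sum>c2\<in>I2. (?A2 c1 c2 - ?A1 c1 c2) * x c2) = 0"
        proof
          fix c1 assume c1: "c1 \<in> I2"
          have "0 = (\<Sum>c2\<in>I1 \<union> I2. (?A2 c1 c2 - ?A1 c1 c2) * x c2)" using H c1 I12(2) by auto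
          also have "\<dots> = (\<Sum>c2\<in>I1. (?A2 c1 c2 - ?A1 c1 c2) * x c2) + (\<Sum>c2\<in>I2. (?A2 c1 c2 - ?A1 c1 c2) * x c2)"
            by (rule sum.union_disjoint) (use fin12 I12(1) in auto)
          also have "(\<Sum>c2\<in>I1. (?A2 c1 c2 - ?A1 c1 c2) * x c2) = 0" using x1 by simp
          finally show "(\<Sum>c2\<in>I2. (?A2 c1 c2 - ?A1 c1 c2) * x c2) = 0" by simp
        qed
        thus ?thesis by (rule key_matrix2[OF fin12(2) inv])
      qed
      show "\<forall>c\<in>I. x c = 0" using x1 x2 I12(2) by auto
    qed
  qed
qed

end
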